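(* Let $(E,\rho_\theta)$ be a complete $b_v(\theta)$ metric space whose function $\theta$ is bounded, and let $S:E\to E$ be such that there is $c\in[0,1)$ with $\rho_\theta(Su,Sw)\le c\,\rho_\theta(u,w)$ for all $u,w\in E$. Then $S$ has a unique fixed point.
   Context: Let $E$ be a nonempty set, $\theta:E\times E\to[1,\infty)$ a function and $v\in\mathbb{N}$. A map $\rho_\theta:E\times E\to[0,\infty)$ is a $b_v(\theta)$ metric (and $(E,\rho_\theta)$ a $b_v(\theta)$ metric space) if for all $u,w\in E$: $\rho_\theta(u,w)=0$ iff $u=w$; $\rho_\theta(u,w)=\rho_\theta(w,u)$; and for all $u,z_1,\dots,z_v,w\in E$ pairwise distinct, $\rho_\theta(u,w)\le\theta(u,w)[\rho_\theta(u,z_1)+\rho_\theta(z_1,z_2)+\dots+\rho_\theta(z_{v-1},z_v)+\rho_\theta(z_v,w)]$. A sequence $\{u_n\}$ converges to $u$ if for every $\varepsilon>0$ there is $n_0$ with $\rho_\theta(u_n,u)<\varepsilon$ for all $n\ge n_0$; it is Cauchy if for every $\varepsilon>0$ there is $n_0$ with $\rho_\theta(u_n,u_{n+p})<\varepsilon$ for all $n\ge n_0$ and $p>0$; the space is complete if every Cauchy sequence converges in $E$. *)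

theory Defs
  imports "HOL-Analysis.Analysis"
begin

text \<open>The intermediate points z_1,...,z_v are given by a
function z on indices 1..v; u, z 1, ..., z v, w are required pairwise distinct.\<close>

definition bv_metric :: "nat \<Rightarrow> ('a \<Rightarrow> 'a \<Rightarrow> real) \<Rightarrow> ('a \<Rightarrow> 'a \<Rightarrow> real) \<Rightarrow> bool" where
  "bv_metric v \<theta> \<rho> \<longleftrightarrow>
     (\<forall>u w. \<theta> u w \<ge> 1) \<and>
     (\<forall>u w. \<rho> u w \<ge> 0) \<and>
     (\<forall>u w. \<rho> u w = 0 \<longleftrightarrow> u = w) \<and>
     (\<forall>u w. \<rho> u w = \<rho> w u) \<and>
     (\<forall>u w (z::nat \<Rightarrow> 'a).
        (let p = (\<lambda>i. if i = 0 then u else if i = Suc v then w else z i) in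
           inj_on p {0..Suc v}) \<longrightarrow>
        \<rho> u w \<le> \<theta> u w * (\<rho> u (z 1) + (\<Sum>i\<in>{1..<v}. \<rho> (z i) (z (Suc i))) + \<rho> (z v) w))"

definition bv_converges :: "('a \<Rightarrow> 'a \<Rightarrow> real) \<Rightarrow> (nat \<Rightarrow> 'a) \<Rightarrow> 'a \<Rightarrow> bool" where
  "bv_converges \<rho> x l \<longleftrightarrow> (\<forall>\<epsilon>>0. \<exists>n0. \<forall>n\<ge>n0. \<rho> (x n) l < \<epsilon>)"

definition bv_cauchy :: "('a \<Rightarrow> 'a \<Rightarrow> real) \<Rightarrow> (nat \<Rightarrow> 'a) \<Rightarrow> bool" where
  "bv_cauchy \<rho> x \<longleftrightarrow> (\<forall>\<epsilon>>0. \<exists>n0. \<forall>n\<ge>n0. \<forall>p>0. \<rho> (x n) (x (n + p)) < \<epsilon>)"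

definition bv_complete :: "('a \<Rightarrow> 'a \<Rightarrow> real) \<Rightarrow> bool" where
  "bv_complete \<rho> \<longleftrightarrow> (\<forall>x. bv_cauchy \<rho> x \<longrightarrow> (\<exists>l. bv_converges \<rho> x l))"

end

theory Submission
  imports Defs
begin

theorem mainTheorem9:
  fixes v :: nat and \<theta> \<rho> :: "'a \<Rightarrow> 'a \<Rightarrow> real" and S :: "'a \<Rightarrow> 'a"
  assumes "v \<ge> 1"
    and "bv_metric v \<theta> \<rho>"
    and "bv_complete \<rho>"
    and "\<exists>M. \<forall>u w. \<theta> u w \<le> M"
    and "\<exists>c::real. 0 \<le> c \<and> c < 1 \<and> (\<forall>u w. \<rho> (S u) (S w) \<le> c * \<rho> u w)"
  shows "\<exists>!x. S x = x"
proof -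
  obtain M where M: "\<forall>u w. \<theta> u w \<le> M" using assms(4) by auto
  obtain c where c0: "0 \<le> c" and c1: "c < 1" and contr: "\<forall>u w. \<rho> (S u) (S w) \<le> c * \<rho> u w"
    using assms(5) by auto
  have th1: "\<And>u w. \<theta> u w \<ge> 1" and nn: "\<And>u w. \<rho> u w \<ge> 0"
    and zero: "\<And>u w. \<rho> u w = 0 \<longleftrightarrow> u = w" and sym: "\<And>u w. \<rho> u w = \<rho> w u"
    using assms(2) unfolding bv_metric_def by auto
  have tri: "\<And>u w z. inj_on (\<lambda>i. if i = 0 then u else if i = Suc v then w else z i) {0..Suc v} \<Longrightarrow>
      \<rho> u w \<le> \<theta> u w * (\<rho> u (z 1) + (\<Sum>i\<in>{1..<v}. \<rho> (z i) (z (Suc i))) + \<rho> (z v) w)"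
    using assms(2) unfolding bv_metric_def Let_def by blast
  have M1: "M \<ge> 1" using th1 M order_trans by blast
  have tri': "\<rho> u w \<le> M * (\<rho> u (z 1) + (\<Sum>i\<in>{1..<v}. \<rho> (z i) (z (Suc i))) + \<rho> (z v) w)"
    if "inj_on (\<lambda>i. if i = 0 then u else if i = Suc v then w else z i) {0..Suc v}" for u w z
  proof -
    have "0 \<le> \<rho> u (z 1) + (\<Sum>i\<in>{1..<v}. \<rho> (z i) (z (Suc i))) + \<rho> (z v) w"
      using nn by (simp add: sum_nonneg add_nonneg_nonneg)
    then have "\<theta> u w * (\<rho> u (z 1) + (\<Sum>i\<in>{1..<v}. \<rho> (z i) (z (Suc i))) + \<rho> (z v) w)
       \<le> M * (\<rho> u (z 1) + (\<Sum>i\<in>{1..<v}. \<rho> (z i) (z (Suc i))) + \<rho> (z v) w)"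
      using M by (simp add: mult_right_mono)
    then show ?thesis using tri[OF that] by linarith
  qed
  have pow: "\<rho> ((S^^n) a) ((S^^n) b) \<le> c^n * \<rho> a b" for n a b
  proof (induction n)
    case 0 then show ?case by simp
  next
    case (Suc n)
    have "\<rho> ((S^^Suc n) a) ((S^^Suc n) b) \<le> c * \<rho> ((S^^n) a) ((S^^n) b)" using contr by simp
    also have "\<dots> \<le> c * (c^n * \<rho> a b)" using Suc c0 by (simp add: mult_left_mono)
    finally show ?case by simp
  qed
  have uniq: "x = y" if "S x = x" "S y = y" for x y
  proof -
    have "\<rho> x y \<le> c * \<rho> x y" using contr that by metis
    then have "\<rho> x y \<le> 0" using mult_strict_right_mono[OF c1, of "\<rho> x y"] by fastforce
    then show ?thesis using nn[of x y] zero by (meson antisym)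
  qed
  have cpow: "(\<lambda>n. c^n) \<longlonglongrightarrow> 0" by (rule LIMSEQ_power_zero) (use c0 c1 in simp)
  have ex: "\<exists>x. S x = x"
  proof -
    define x0 where "x0 = (undefined::'a)"
    define x where "x n = (S^^n) x0" for n
    have xS: "x (Suc n) = S (x n)" for n by (simp add: x_def)
    have xadd: "x (m + n) = (S^^m) (x n)" for m n by (simp add: x_def funpow_add)
    show ?thesis
    proof (cases "\<exists>n. x (Suc n) = x n")
      case True then show ?thesis using xS by metis
    next
      case False
      have injx: "inj x"
      proof (rule linorder_injI)
        fix a b :: nat assume ab: "a < b"
        show "x a \<noteq> x b"
        proof
          assume eq: "x a = x b"
          define q where "q = b - a"
          have q1: "q \<ge> 1" using ab by (simp add: q_def)
          have e1: "x (q + a) = x a" using eq ab by (simp add: q_def)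
          have e2: "x (q + Suc a) = x (Suc a)" using e1 xS by (metis add_Suc_right)
          have "\<rho> (x a) (x (Suc a)) = \<rho> (x (q + a)) (x (q + Suc a))" using e1 e2 by simp
          also have "\<dots> \<le> c^q * \<rho> (x a) (x (Suc a))" unfolding xadd by (rule pow)
          finally have h: "\<rho> (x a) (x (Suc a)) \<le> c^q * \<rho> (x a) (x (Suc a))" .
          have "c^q \<le> c^1" using q1 c0 c1 by (intro power_decreasing) auto
          then have "c^q < 1" using c1 by simp
          then have "\<rho> (x a) (x (Suc a)) \<le> 0" using h mult_strict_right_mono[of "c^q" 1 "\<rho> (x a) (x (Suc a))"] by fastforce
          then have "x a = x (Suc a)" using nn[of "x a" "x (Suc a)"] zero by (meson antisym)
          then show False using False by metis
        qed
      qed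
      have "(\<lambda>n. M * c^n) \<longlonglongrightarrow> 0" using cpow by (rule tendsto_mult_right_zero)
      then obtain N0 where N0: "\<forall>n\<ge>N0. \<bar>M * c^n\<bar> < 1"
        unfolding LIMSEQ_iff by (metis diff_zero real_norm_def zero_less_one)
      define N where "N = max N0 v"
      have MN: "M * c^N < 1" using N0[rule_format, of N] by (simp add: N_def)
      have Nv: "N \<ge> v" by (simp add: N_def)
      have MN0: "M * c^N \<ge> 0" using M1 c0 by simp
      define z where "z i = (if i < v then x i else x N)" for i
      define K where "K = \<rho> (x 0) (z 1) + (\<Sum>i\<in>{1..<v}. \<rho> (z i) (z (Suc i)))"
      have K0: "K \<ge> 0" unfolding K_def using nn by (simp add: sum_nonneg add_nonneg_nonneg)
      define b where "b p = \<rho> (x 0) (x p)" for p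
      define B where "B = max (Max (b ` {..N})) (M*K/(1 - M*c^N))"
      have B1: "M*K \<le> B * (1 - M*c^N)"
      proof -
        have "M*K/(1 - M*c^N) \<le> B" by (simp add: B_def)
        then show ?thesis using MN by (simp add: pos_divide_le_eq)
      qed
      have bB: "b p \<le> B" for p
      proof (induction p rule: less_induct)
        case (less p)
        show ?case
        proof (cases "p \<le> N")
          case True
          then have "b p \<le> Max (b ` {..N})" by (intro Max_ge) auto
          then show ?thesis by (simp add: B_def)
        next
          case False
          have inj: "inj_on (\<lambda>i. if i = 0 then x 0 else if i = Suc v then x p else z i) {0..Suc v}"
          proof -
            define idx where "idx i = (if i = 0 then 0 else if i = Suc v then p else if i < v then i else N)" for i
            have "inj_on idx {0..Suc v}" using False Nv assms(1)
              by (auto simp: inj_on_def idx_def split: if_splits)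
            then have "inj_on (x \<circ> idx) {0..Suc v}" using injx
              by (metis comp_inj_on inj_on_subset subset_UNIV)
            moreover have eqs: "\<And>i. i \<in> {0..Suc v} \<Longrightarrow> (x \<circ> idx) i = (\<lambda>i. if i = 0 then x 0 else if i = Suc v then x p else z i) i"
              by (auto simp: idx_def z_def)
            have "inj_on (x \<circ> idx) {0..Suc v} = inj_on (\<lambda>i. if i = 0 then x 0 else if i = Suc v then x p else z i) {0..Suc v}"
              by (rule inj_on_cong) (rule eqs)
            ultimately show ?thesis by simp
          qed
          have zv: "z v = x N" by (simp add: z_def)
          have h1: "b p \<le> M * (K + \<rho> (x N) (x p))"
            using tri'[OF inj] unfolding b_def K_def zv by simp
          have xN: "x N = (S^^N) (x 0)" using xadd[of N 0] by simp
          have xp: "x p = (S^^N) (x (p - N))" using xadd[of N "p - N"] False by simp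
          have h2: "\<rho> (x N) (x p) \<le> c^N * b (p - N)" unfolding xN xp b_def by (rule pow)
          have "p - N < p" using False Nv assms(1) by simp
          then have h3: "b (p - N) \<le> B" using less.IH by blast
          have "c^N * b (p - N) \<le> c^N * B" using h3 c0 by (simp add: mult_left_mono)
          then have "\<rho> (x N) (x p) \<le> c^N * B" using h2 by linarith
          then have "M * (K + \<rho> (x N) (x p)) \<le> M * (K + c^N * B)" using M1 by (simp add: mult_left_mono)
          also have "\<dots> = M*K + M*c^N*B" by (simp add: algebra_simps)
          also have "\<dots> \<le> B" using B1 by (simp add: algebra_simps)
          finally show ?thesis using h1 by linarith
        qed
      qed
      have cauchy: "bv_cauchy \<rho> x"
        unfolding bv_cauchy_def
      proof (intro allI impI)
        fix \<epsilon> :: real assume e: "\<epsilon> > 0"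
        have "(\<lambda>n. c^n * B) \<longlonglongrightarrow> 0" using cpow by (rule tendsto_mult_left_zero)
        then obtain n0 where n0: "\<forall>n\<ge>n0. \<bar>c^n * B\<bar> < \<epsilon>"
          unfolding LIMSEQ_iff using e by (metis diff_zero real_norm_def)
        show "\<exists>n0. \<forall>n\<ge>n0. \<forall>p>0. \<rho> (x n) (x (n + p)) < \<epsilon>"
        proof (intro exI allI impI)
          fix n p :: nat assume n: "n \<ge> n0" and "p > 0"
          have "\<rho> (x n) (x (n + p)) = \<rho> ((S^^n) (x 0)) ((S^^n) (x p))"
            using xadd[of n 0] xadd[of n p] by simp
          also have "\<dots> \<le> c^n * b p" unfolding b_def by (rule pow)
          also have "\<dots> \<le> c^n * B" using bB c0 by (simp add: mult_left_mono)
          also have "\<dots> < \<epsilon>" using n0 n by fastforce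
          finally show "\<rho> (x n) (x (n + p)) < \<epsilon>" .
        qed
      qed
      obtain l where l: "bv_converges \<rho> x l" using assms(3) cauchy unfolding bv_complete_def by blast
      have lim: "(\<lambda>n. \<rho> (x n) l) \<longlonglongrightarrow> 0"
        using l nn unfolding bv_converges_def LIMSEQ_iff by simp
      have far: "\<exists>N. \<forall>k\<ge>N. x k \<noteq> y" for y
      proof (cases "\<exists>k. x k = y")
        case True
        then obtain k0 where "x k0 = y" by blast
        then show ?thesis using injx by (metis Suc_n_not_le_n injD)
      next
        case False then show ?thesis by blast
      qed
      show ?thesis
      proof (rule ccontr)
        assume nf: "\<nexists>x. S x = x"
        then have ne: "S l \<noteq> l" by blast
        define \<delta> where "\<delta> = \<rho> l (S l)"
        have d0: "\<delta> > 0" using nn zero ne unfolding \<delta>_def by (metis less_eq_real_def)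
        define ch where "ch n = \<rho> l (x (n+1)) + (\<Sum>i\<in>{1..<v}. \<rho> (x (n+i)) (x (n + Suc i))) + \<rho> (x (n+v)) (S l)" for n
        have t1: "(\<lambda>n. \<rho> l (x (n+1))) \<longlonglongrightarrow> 0"
          using LIMSEQ_ignore_initial_segment[OF lim, of 1] by (simp add: sym)
        have t2: "(\<lambda>n. \<Sum>i\<in>{1..<v}. \<rho> (x (n+i)) (x (n + Suc i))) \<longlonglongrightarrow> 0"
        proof (rule tendsto_null_sum)
          fix i
          have g: "(\<lambda>n. c^(n+i) * \<rho> (x 0) (x 1)) \<longlonglongrightarrow> 0"
            using LIMSEQ_ignore_initial_segment[OF cpow, of i] by (rule tendsto_mult_left_zero)
          show "(\<lambda>n. \<rho> (x (n+i)) (x (n + Suc i))) \<longlonglongrightarrow> 0"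
          proof (rule Lim_null_comparison[OF _ g])
            show "\<forall>\<^sub>F n in sequentially. norm (\<rho> (x (n+i)) (x (n + Suc i))) \<le> c^(n+i) * \<rho> (x 0) (x 1)"
            proof (intro always_eventually allI)
              fix n
              have "\<rho> (x (n+i)) (x (n + Suc i)) = \<rho> ((S^^(n+i)) (x 0)) ((S^^(n+i)) (x 1))"
                using xadd[of "n+i" 0] xadd[of "n+i" 1] by simp
              also have "\<dots> \<le> c^(n+i) * \<rho> (x 0) (x 1)" by (rule pow)
              finally show "norm (\<rho> (x (n+i)) (x (n + Suc i))) \<le> c^(n+i) * \<rho> (x 0) (x 1)"
                using nn by simp
            qed
          qed
        qed
        have t3: "(\<lambda>n. \<rho> (x (n+v)) (S l)) \<longlonglongrightarrow> 0"
        proof (rule Lim_null_comparison)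
          show "(\<lambda>n. c * \<rho> (x (n + (v-1))) l) \<longlonglongrightarrow> 0"
            using LIMSEQ_ignore_initial_segment[OF lim, of "v-1"] by (rule tendsto_mult_right_zero)
          show "\<forall>\<^sub>F n in sequentially. norm (\<rho> (x (n+v)) (S l)) \<le> c * \<rho> (x (n + (v-1))) l"
          proof (intro always_eventually allI)
            fix n
            have "n + v = Suc (n + (v-1))" using assms(1) by simp
            then have "x (n+v) = S (x (n + (v-1)))" using xS by metis
            then show "norm (\<rho> (x (n+v)) (S l)) \<le> c * \<rho> (x (n + (v-1))) l"
              using contr nn by simp
          qed
        qed
        have "ch \<longlonglongrightarrow> 0" unfolding ch_def using tendsto_add[OF tendsto_add[OF t1 t2] t3] by simp
        moreover have "\<delta> / M > 0" using d0 M1 by simp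
        ultimately have ev: "\<forall>\<^sub>F n in sequentially. ch n < \<delta> / M" by (rule order_tendstoD(2))
        obtain N1 where N1: "\<forall>k\<ge>N1. x k \<noteq> l" using far by blast
        obtain N2 where N2: "\<forall>k\<ge>N2. x k \<noteq> S l" using far by blast
        obtain N3 where N3: "\<forall>n\<ge>N3. ch n < \<delta> / M" using ev unfolding eventually_sequentially by blast
        define n where "n = max N3 (N1 + N2)"
        have chn: "ch n < \<delta> / M" using N3 by (simp add: n_def)
        have inj: "inj_on (\<lambda>i. if i = 0 then l else if i = Suc v then S l else (\<lambda>i. x (n+i)) i) {0..Suc v}"
        proof -
          have nN: "n \<ge> N1" "n \<ge> N2" by (auto simp: n_def)
          have a1: "x (n+i) \<noteq> l" "l \<noteq> x (n+i)" for i using N1 nN by (metis le_add1 order_trans)+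
          have a2: "x (n+i) \<noteq> S l" "S l \<noteq> x (n+i)" for i using N2 nN by (metis le_add1 order_trans)+
          show ?thesis unfolding inj_on_def
            using a1 a2 ne by (auto simp: inj_eq[OF injx])
        qed
        have "\<delta> \<le> M * ch n" using tri'[OF inj] unfolding \<delta>_def ch_def by simp
        also have "\<dots> < M * (\<delta> / M)" using chn M1 by (intro mult_strict_left_mono) auto
        also have "\<dots> = \<delta>" using M1 by simp
        finally show False by simp
      qed
    qed
  qed
  show ?thesis using ex uniq by blast
qed

end
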